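(* Let $A\subset\mathbb{R}^m$ be a set-germ at $0$ with $0\in\overline{A}$ and $B\subset\mathbb{R}^n$ a set-germ at $0$ with $0\in\overline{B}$. Then $A$ satisfies condition (SSP) at $0\in\mathbb{R}^m$ and $B$ satisfies condition (SSP) at $0\in\mathbb{R}^n$ if and only if $A\times B$ satisfies condition (SSP) at $(0,0)\in\mathbb{R}^m\times\mathbb{R}^n$.
   Context: For a set-germ $A\subset\mathbb{R}^k$ at $0$ with $0\in\overline A$, $D(A)=\{a\in S^{k-1}:\exists\, x_i\in A\setminus\{0\},\ x_i\to0,\ x_i/\|x_i\|\to a\}$. For sequences, $\|u_m\|\ll\|v_m\|,\|w_m\|$ means $\|u_m\|/\|v_m\|\to0$ and $\|u_m\|/\|w_m\|\to0$. $A$ satisfies condition (SSP) at $0$ if for every sequence $a_m\in\mathbb{R}^k$ tending to $0$ with $\lim a_m/\|a_m\|\in D(A)$ there is a sequence $b_m\in A$ with $\|a_m-b_m\|\ll\|a_m\|,\|b_m\|$. *)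

theory Defs
  imports "HOL-Analysis.Analysis"
begin

definition dirset :: "'a::euclidean_space set \<Rightarrow> 'a set" where
  "dirset A = {u \<in> sphere 0 1. \<exists>x::nat \<Rightarrow> 'a. (\<forall>i. x i \<in> A - {0}) \<and> x \<longlonglongrightarrow> 0 \<and>
       (\<lambda>i. (1 / norm (x i)) *\<^sub>R x i) \<longlonglongrightarrow> u}"

definition SSP :: "'a::euclidean_space set \<Rightarrow> bool" where
  "SSP A \<longleftrightarrow> (\<forall>a::nat \<Rightarrow> 'a. (\<forall>i. a i \<noteq> 0) \<and> a \<longlonglongrightarrow> 0 \<and>
       (\<exists>u \<in> dirset A. (\<lambda>i. (1 / norm (a i)) *\<^sub>R a i) \<longlonglongrightarrow> u) \<longrightarrow>
     (\<exists>b::nat \<Rightarrow> 'a. (\<forall>i. b i \<in> A) \<and>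
        (\<lambda>i. norm (a i - b i) / norm (a i)) \<longlonglongrightarrow> 0 \<and>
        (\<lambda>i. norm (a i - b i) / norm (b i)) \<longlonglongrightarrow> 0))"

end

theory Submission
  imports Defs
begin

lemma small_pt:
  assumes "0 \<in> closure A" "e > 0"
  shows "\<exists>x\<in>A. norm x < e"
  using assms by (auto simp: closure_approachable dist_norm)

lemma small_seq:
  fixes a :: "nat \<Rightarrow> 'a::real_normed_vector"
  assumes "0 \<in> closure A" "\<forall>i. a i \<noteq> 0"
  shows "\<exists>b. \<forall>i. b i \<in> A \<and> norm (b i) < norm (a i) ^ 2"
proof -
  have "\<forall>i. \<exists>x\<in>A. norm x < norm (a i) ^ 2"
    using assms by (intro allI small_pt) auto
  then show ?thesis by metis
qed

lemma ratio2:
  fixes a b :: "nat \<Rightarrow> 'a::real_normed_vector"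
  assumes "\<forall>i. a i \<noteq> 0" "(\<lambda>i. norm (a i - b i) / norm (a i)) \<longlonglongrightarrow> 0"
  shows "(\<lambda>i. norm (a i - b i) / norm (b i)) \<longlonglongrightarrow> 0"
proof (rule Lim_null_comparison)
  show "(\<lambda>i. 2 * (norm (a i - b i) / norm (a i))) \<longlonglongrightarrow> 0"
    using tendsto_mult[OF tendsto_const assms(2), of 2] by simp
  have "eventually (\<lambda>i. norm (a i - b i) / norm (a i) < 1/2) sequentially"
    using order_tendstoD(2)[OF assms(2), of "1/2"] by simp
  then show "eventually (\<lambda>i. norm (norm (a i - b i) / norm (b i)) \<le> 2 * (norm (a i - b i) / norm (a i))) sequentially"
  proof eventually_elim
    case (elim i)
    have na: "norm (a i) > 0" using assms(1) by simp
    hence h: "norm (a i - b i) < norm (a i) / 2" using elim by (simp add: field_simps)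
    have "norm (a i) \<le> norm (a i - b i) + norm (b i)" by (metis norm_triangle_sub add.commute)
    hence nb: "norm (b i) \<ge> norm (a i) / 2" using h by linarith
    have "norm (a i - b i) / norm (b i) \<le> norm (a i - b i) / (norm (a i) / 2)"
      using nb na by (intro divide_left_mono) (auto intro!: mult_pos_pos)
    thus ?case by (simp add: field_simps)
  qed
qed

lemma dir_lemma:
  fixes f :: "nat \<Rightarrow> 'a::real_normed_vector" and g :: "nat \<Rightarrow> 'c::real_normed_vector"
  assumes "(\<lambda>i. (1 / norm (g i)) *\<^sub>R f i) \<longlonglongrightarrow> v" "v \<noteq> 0"
  shows "eventually (\<lambda>i. f i \<noteq> 0) sequentially"
    and "(\<lambda>i. (1 / norm (f i)) *\<^sub>R f i) \<longlonglongrightarrow> (1 / norm v) *\<^sub>R v"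
proof -
  have ev: "eventually (\<lambda>i. (1 / norm (g i)) *\<^sub>R f i \<noteq> 0) sequentially"
    using assms by (rule tendsto_imp_eventually_ne)
  then show "eventually (\<lambda>i. f i \<noteq> 0) sequentially" by eventually_elim auto
  have n: "(\<lambda>i. norm ((1 / norm (g i)) *\<^sub>R f i)) \<longlonglongrightarrow> norm v"
    using assms(1) by (rule tendsto_norm)
  have lim: "(\<lambda>i. inverse (norm ((1 / norm (g i)) *\<^sub>R f i)) *\<^sub>R ((1 / norm (g i)) *\<^sub>R f i)) \<longlonglongrightarrow> inverse (norm v) *\<^sub>R v"
    using assms by (intro tendsto_scaleR tendsto_inverse n) auto
  have e: "eventually (\<lambda>i. inverse (norm ((1 / norm (g i)) *\<^sub>R f i)) *\<^sub>R ((1 / norm (g i)) *\<^sub>R f i) = (1 / norm (f i)) *\<^sub>R f i) sequentially"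
    using ev by eventually_elim (auto simp: divide_simps)
  show "(\<lambda>i. (1 / norm (f i)) *\<^sub>R f i) \<longlonglongrightarrow> (1 / norm v) *\<^sub>R v"
    using Lim_transform_eventually[OF lim e] by (simp add: inverse_eq_divide)
qed


lemma dir_fst:
  fixes A :: "'a::euclidean_space set" and B :: "'b::euclidean_space set"
  assumes "w \<in> dirset (A \<times> B)" "fst w \<noteq> 0"
  shows "(1 / norm (fst w)) *\<^sub>R fst w \<in> dirset A"
proof -
  obtain x where x: "\<forall>i. x i \<in> A \<times> B - {0}" "x \<longlonglongrightarrow> 0" "(\<lambda>i. (1 / norm (x i)) *\<^sub>R x i) \<longlonglongrightarrow> w"
    using assms(1) unfolding dirset_def by blast
  have f: "(\<lambda>i. (1 / norm (x i)) *\<^sub>R fst (x i)) \<longlonglongrightarrow> fst w"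
    using tendsto_fst[OF x(3)] by simp
  obtain N where N: "\<forall>i\<ge>N. fst (x i) \<noteq> 0"
    using dir_lemma(1)[OF f assms(2)] by (auto simp: eventually_sequentially)
  have d: "(\<lambda>i. (1 / norm (fst (x i))) *\<^sub>R fst (x i)) \<longlonglongrightarrow> (1 / norm (fst w)) *\<^sub>R fst w"
    using dir_lemma(2)[OF f assms(2)] .
  define y where "y i = fst (x (i+N))" for i
  have 1: "\<forall>i. y i \<in> A - {0}" using x(1) N by (auto simp: y_def mem_Times_iff)
  have 2: "y \<longlonglongrightarrow> 0" unfolding y_def using LIMSEQ_ignore_initial_segment[OF tendsto_fst[OF x(2)], of N]
    by simp
  have 3: "(\<lambda>i. (1 / norm (y i)) *\<^sub>R y i) \<longlonglongrightarrow> (1 / norm (fst w)) *\<^sub>R fst w"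
    using LIMSEQ_ignore_initial_segment[OF d, of N] by (simp add: y_def)
  have 4: "(1 / norm (fst w)) *\<^sub>R fst w \<in> sphere 0 1" using assms(2) by simp
  show ?thesis unfolding dirset_def using 1 2 3 4 by blast
qed

lemma dir_snd:
  fixes A :: "'a::euclidean_space set" and B :: "'b::euclidean_space set"
  assumes "w \<in> dirset (A \<times> B)" "snd w \<noteq> 0"
  shows "(1 / norm (snd w)) *\<^sub>R snd w \<in> dirset B"
proof -
  obtain x where x: "\<forall>i. x i \<in> A \<times> B - {0}" "x \<longlonglongrightarrow> 0" "(\<lambda>i. (1 / norm (x i)) *\<^sub>R x i) \<longlonglongrightarrow> w"
    using assms(1) unfolding dirset_def by blast
  have f: "(\<lambda>i. (1 / norm (x i)) *\<^sub>R snd (x i)) \<longlonglongrightarrow> snd w"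
    using tendsto_snd[OF x(3)] by simp
  obtain N where N: "\<forall>i\<ge>N. snd (x i) \<noteq> 0"
    using dir_lemma(1)[OF f assms(2)] by (auto simp: eventually_sequentially)
  have d: "(\<lambda>i. (1 / norm (snd (x i))) *\<^sub>R snd (x i)) \<longlonglongrightarrow> (1 / norm (snd w)) *\<^sub>R snd w"
    using dir_lemma(2)[OF f assms(2)] .
  define y where "y i = snd (x (i+N))" for i
  have 1: "\<forall>i. y i \<in> B - {0}" using x(1) N by (auto simp: y_def mem_Times_iff)
  have 2: "y \<longlonglongrightarrow> 0" unfolding y_def using LIMSEQ_ignore_initial_segment[OF tendsto_snd[OF x(2)], of N]
    by simp
  have 3: "(\<lambda>i. (1 / norm (y i)) *\<^sub>R y i) \<longlonglongrightarrow> (1 / norm (snd w)) *\<^sub>R snd w"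
    using LIMSEQ_ignore_initial_segment[OF d, of N] by (simp add: y_def)
  have 4: "(1 / norm (snd w)) *\<^sub>R snd w \<in> sphere 0 1" using assms(2) by simp
  show ?thesis unfolding dirset_def using 1 2 3 4 by blast
qed

lemma pair_dir_aux:
  fixes x :: "nat \<Rightarrow> 'a::real_normed_vector" and y :: "nat \<Rightarrow> 'b::real_normed_vector"
  assumes x0: "\<forall>i. x i \<noteq> 0" and xl: "x \<longlonglongrightarrow> 0" and xd: "(\<lambda>i. (1 / norm (x i)) *\<^sub>R x i) \<longlonglongrightarrow> u"
    and y: "\<forall>i. norm (y i) < norm (x i) ^ 2"
  shows "(\<lambda>i. (1 / norm (x i, y i)) *\<^sub>R x i) \<longlonglongrightarrow> u"
    and "(\<lambda>i. (1 / norm (x i, y i)) *\<^sub>R y i) \<longlonglongrightarrow> 0"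
proof -
  have nx: "(\<lambda>i. norm (x i)) \<longlonglongrightarrow> 0" using tendsto_norm_zero[OF xl] .
  have bnd: "norm (x i) \<le> norm (x i, y i)" "norm (x i, y i) \<le> norm (x i) + norm (x i)^2" for i
    using norm_fst_le[of "x i" "y i"] norm_Pair_le[of "x i" "y i"] y[rule_format, of i] by auto
  have pos: "norm (x i) > 0" for i using x0 by simp
  have r: "(\<lambda>i. norm (x i) / norm (x i, y i)) \<longlonglongrightarrow> 1"
  proof (rule tendsto_sandwich)
    show "eventually (\<lambda>i. 1 / (1 + norm (x i)) \<le> norm (x i) / norm (x i, y i)) sequentially"
    proof (rule always_eventually, rule allI)
      fix i
      have p: "norm (x i, y i) > 0" using bnd(1)[of i] pos[of i] by linarith
      have "norm (x i, y i) \<le> norm (x i) * (1 + norm (x i))" using bnd(2)[of i] by (simp add: power2_eq_square algebra_simps)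
      thus "1 / (1 + norm (x i)) \<le> norm (x i) / norm (x i, y i)"
        using p pos[of i] by (simp add: divide_simps mult.commute add_pos_nonneg)
    qed
    show "eventually (\<lambda>i. norm (x i) / norm (x i, y i) \<le> 1) sequentially"
      using bnd(1) pos by (intro always_eventually) (auto simp: divide_simps)
    show "(\<lambda>i. 1 / (1 + norm (x i))) \<longlonglongrightarrow> 1"
      using tendsto_divide[OF tendsto_const tendsto_add[OF tendsto_const nx], of 1 1] by simp
  qed (rule tendsto_const)
  have lim: "(\<lambda>i. (norm (x i) / norm (x i, y i)) *\<^sub>R ((1 / norm (x i)) *\<^sub>R x i)) \<longlonglongrightarrow> 1 *\<^sub>R u"
    by (intro tendsto_scaleR r xd)
  have eq: "(\<lambda>i. (norm (x i) / norm (x i, y i)) *\<^sub>R ((1 / norm (x i)) *\<^sub>R x i)) = (\<lambda>i. (1 / norm (x i, y i)) *\<^sub>R x i)"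
    using pos by (intro ext) simp
  show "(\<lambda>i. (1 / norm (x i, y i)) *\<^sub>R x i) \<longlonglongrightarrow> u" using lim unfolding eq by simp
  show "(\<lambda>i. (1 / norm (x i, y i)) *\<^sub>R y i) \<longlonglongrightarrow> 0"
  proof (rule Lim_null_comparison[OF always_eventually nx], rule allI)
    fix i
    have p: "norm (x i, y i) > 0" using bnd(1)[of i] pos[of i] by linarith
    have "norm ((1 / norm (x i, y i)) *\<^sub>R y i) = norm (y i) / norm (x i, y i)" by simp
    also have "\<dots> \<le> norm (y i) / norm (x i)" using p pos[of i] bnd(1)[of i] by (intro divide_left_mono) auto
    also have "\<dots> \<le> norm (x i)" using y[rule_format, of i] pos[of i] by (simp add: divide_simps power2_eq_square)
    finally show "norm ((1 / norm (x i, y i)) *\<^sub>R y i) \<le> norm (x i)" .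
  qed
qed


lemma small_lim:
  fixes x :: "nat \<Rightarrow> 'a::real_normed_vector" and y :: "nat \<Rightarrow> 'b::real_normed_vector"
  assumes "x \<longlonglongrightarrow> 0" "\<forall>i. norm (y i) < norm (x i) ^ 2"
  shows "y \<longlonglongrightarrow> 0"
proof (rule Lim_null_comparison)
  show "eventually (\<lambda>i. norm (y i) \<le> norm (x i) ^ 2) sequentially"
    using assms(2) by (intro always_eventually) (auto intro: less_imp_le)
  show "(\<lambda>i. norm (x i) ^ 2) \<longlonglongrightarrow> 0"
    using tendsto_power[OF tendsto_norm_zero[OF assms(1)], of 2] by simp
qed

lemma dir_pair_fst:
  fixes A :: "'a::euclidean_space set" and B :: "'b::euclidean_space set"
  assumes "u \<in> dirset A" "0 \<in> closure B"
  shows "(u, 0) \<in> dirset (A \<times> B)"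
proof -
  obtain x where x: "\<forall>i. x i \<in> A - {0}" "x \<longlonglongrightarrow> 0" "(\<lambda>i. (1 / norm (x i)) *\<^sub>R x i) \<longlonglongrightarrow> u"
    and u: "u \<in> sphere 0 1"
    using assms(1) unfolding dirset_def by blast
  have x0: "\<forall>i. x i \<noteq> 0" using x(1) by auto
  obtain y where y: "\<forall>i. y i \<in> B \<and> norm (y i) < norm (x i) ^ 2"
    using small_seq[OF assms(2) x0] by blast
  define z where "z i = (x i, y i)" for i
  have 1: "\<forall>i. z i \<in> A \<times> B - {0}" using x(1) y by (auto simp: z_def zero_prod_def)
  have 2: "z \<longlonglongrightarrow> 0" unfolding z_def
    using tendsto_Pair[OF x(2) small_lim[OF x(2), of y]] y by (simp add: zero_prod_def)
  have 3: "(\<lambda>i. (1 / norm (z i)) *\<^sub>R z i) \<longlonglongrightarrow> (u, 0)"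
    unfolding z_def using tendsto_Pair[OF pair_dir_aux(1)[OF x0 x(2) x(3), of y] pair_dir_aux(2)[OF x0 x(2) x(3), of y]] y
    by simp
  have 4: "(u, 0) \<in> sphere 0 1" using u by (simp add: zero_prod_def dist_Pair_Pair)
  show ?thesis unfolding dirset_def using 1 2 3 4 by blast
qed

lemma dir_pair_snd:
  fixes A :: "'a::euclidean_space set" and B :: "'b::euclidean_space set"
  assumes "u \<in> dirset B" "0 \<in> closure A"
  shows "(0, u) \<in> dirset (A \<times> B)"
proof -
  obtain x where x: "\<forall>i. x i \<in> B - {0}" "x \<longlonglongrightarrow> 0" "(\<lambda>i. (1 / norm (x i)) *\<^sub>R x i) \<longlonglongrightarrow> u"
    and u: "u \<in> sphere 0 1"
    using assms(1) unfolding dirset_def by blast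
  have x0: "\<forall>i. x i \<noteq> 0" using x(1) by auto
  obtain y where y: "\<forall>i. y i \<in> A \<and> norm (y i) < norm (x i) ^ 2"
    using small_seq[OF assms(2) x0] by blast
  define z where "z i = (y i, x i)" for i
  have nz: "norm (z i) = norm (x i, y i)" for i by (simp add: z_def norm_Pair add.commute)
  have 1: "\<forall>i. z i \<in> A \<times> B - {0}" using x(1) y by (auto simp: z_def zero_prod_def)
  have 2: "z \<longlonglongrightarrow> 0" unfolding z_def
    using tendsto_Pair[OF small_lim[OF x(2), of y] x(2)] y by (simp add: zero_prod_def)
  have 3: "(\<lambda>i. (1 / norm (z i)) *\<^sub>R z i) \<longlonglongrightarrow> (0, u)"
    unfolding nz unfolding z_def using tendsto_Pair[OF pair_dir_aux(2)[OF x0 x(2) x(3), of y] pair_dir_aux(1)[OF x0 x(2) x(3), of y]] y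
    by simp
  have 4: "(0, u) \<in> sphere 0 1" using u by (simp add: zero_prod_def dist_Pair_Pair)
  show ?thesis unfolding dirset_def using 1 2 3 4 by blast
qed

lemma ssp_ev:
  fixes A :: "'a::euclidean_space set"
  assumes S: "SSP A" and al: "a \<longlonglongrightarrow> 0" and ev: "eventually (\<lambda>i. a i \<noteq> 0) sequentially"
    and ad: "(\<lambda>i. (1 / norm (a i)) *\<^sub>R a i) \<longlonglongrightarrow> u" and u: "u \<in> dirset A"
  shows "\<exists>b. (\<forall>i. b i \<in> A) \<and> (\<lambda>i. norm (a i - b i) / norm (a i)) \<longlonglongrightarrow> 0"
proof -
  have u0: "u \<noteq> 0" using u by (auto simp: dirset_def)
  define a' where "a' i = (if a i = 0 then u else a i)" for i
  have e: "eventually (\<lambda>i. a i = a' i) sequentially" using ev by eventually_elim (simp add: a'_def)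
  have 1: "\<forall>i. a' i \<noteq> 0" using u0 by (simp add: a'_def)
  have 2: "a' \<longlonglongrightarrow> 0" using Lim_transform_eventually[OF al e] .
  have e2: "eventually (\<lambda>i. (1 / norm (a i)) *\<^sub>R a i = (1 / norm (a' i)) *\<^sub>R a' i) sequentially"
    using e by eventually_elim simp
  have 3: "(\<lambda>i. (1 / norm (a' i)) *\<^sub>R a' i) \<longlonglongrightarrow> u" using Lim_transform_eventually[OF ad e2] .
  obtain b where b: "\<forall>i. b i \<in> A" "(\<lambda>i. norm (a' i - b i) / norm (a' i)) \<longlonglongrightarrow> 0"
    using S 1 2 3 u unfolding SSP_def by blast
  have e3: "eventually (\<lambda>i. norm (a' i - b i) / norm (a' i) = norm (a i - b i) / norm (a i)) sequentially"
    using e by eventually_elim simp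
  show ?thesis using b Lim_transform_eventually[OF b(2) e3] by blast
qed


lemma comp_fst:
  fixes A :: "'a::euclidean_space set" and B :: "'b::euclidean_space set"
    and a :: "nat \<Rightarrow> 'a \<times> 'b"
  assumes S: "SSP A" and c: "0 \<in> closure A" and a0: "\<forall>i. a i \<noteq> 0" and al: "a \<longlonglongrightarrow> 0"
    and ad: "(\<lambda>i. (1 / norm (a i)) *\<^sub>R a i) \<longlonglongrightarrow> w" and w: "w \<in> dirset (A \<times> B)"
  shows "\<exists>b1. (\<forall>i. b1 i \<in> A) \<and> (\<lambda>i. norm (fst (a i) - b1 i) / norm (a i)) \<longlonglongrightarrow> 0"
proof -
  have f: "(\<lambda>i. (1 / norm (a i)) *\<^sub>R fst (a i)) \<longlonglongrightarrow> fst w"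
    using tendsto_fst[OF ad] by simp
  have nx: "(\<lambda>i. norm (a i)) \<longlonglongrightarrow> 0" using tendsto_norm_zero[OF al] .
  have pos: "norm (a i) > 0" for i using a0 by simp
  have fl: "norm (fst (a i)) \<le> norm (a i)" for i
    using norm_fst_le[of "fst (a i)" "snd (a i)"] by simp
  show ?thesis
  proof (cases "fst w = 0")
    case True
    obtain b1 where b1: "\<forall>i. b1 i \<in> A \<and> norm (b1 i) < norm (a i) ^ 2"
      using small_seq[OF c a0] by blast
    have "(\<lambda>i. norm (fst (a i) - b1 i) / norm (a i)) \<longlonglongrightarrow> 0"
    proof (rule Lim_null_comparison[OF always_eventually])
      show "(\<lambda>i. norm ((1 / norm (a i)) *\<^sub>R fst (a i)) + norm (a i)) \<longlonglongrightarrow> 0"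
        using tendsto_add[OF tendsto_norm_zero[OF f[unfolded True]] nx] by simp
      show "\<forall>i. norm (norm (fst (a i) - b1 i) / norm (a i)) \<le> norm ((1 / norm (a i)) *\<^sub>R fst (a i)) + norm (a i)"
      proof
        fix i
        have "norm (fst (a i) - b1 i) \<le> norm (fst (a i)) + norm (b1 i)" by (rule norm_triangle_ineq4)
        also have "\<dots> \<le> norm (fst (a i)) + norm (a i) * norm (a i)"
          using b1[rule_format, of i] by (simp add: power2_eq_square)
        finally have h: "norm (fst (a i) - b1 i) \<le> norm (fst (a i)) + norm (a i) * norm (a i)" .
        have "norm (fst (a i) - b1 i) / norm (a i) \<le> (norm (fst (a i)) + norm (a i) * norm (a i)) / norm (a i)"
          using h pos[of i] by (intro divide_right_mono) auto
        also have "\<dots> = norm (fst (a i)) / norm (a i) + norm (a i)" using pos[of i] by (simp add: field_simps)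
        finally show "norm (norm (fst (a i) - b1 i) / norm (a i)) \<le> norm ((1 / norm (a i)) *\<^sub>R fst (a i)) + norm (a i)"
          by simp
      qed
    qed
    thus ?thesis using b1 by blast
  next
    case False
    have ev: "eventually (\<lambda>i. fst (a i) \<noteq> 0) sequentially" using dir_lemma(1)[OF f False] .
    have d: "(\<lambda>i. (1 / norm (fst (a i))) *\<^sub>R fst (a i)) \<longlonglongrightarrow> (1 / norm (fst w)) *\<^sub>R fst w"
      using dir_lemma(2)[OF f False] .
    have fl0: "(\<lambda>i. fst (a i)) \<longlonglongrightarrow> 0" using tendsto_fst[OF al] by simp
    obtain b1 where b1: "\<forall>i. b1 i \<in> A" "(\<lambda>i. norm (fst (a i) - b1 i) / norm (fst (a i))) \<longlonglongrightarrow> 0"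
      using ssp_ev[OF S fl0 ev d dir_fst[OF w False]] by blast
    have "(\<lambda>i. norm (fst (a i) - b1 i) / norm (a i)) \<longlonglongrightarrow> 0"
    proof (rule Lim_null_comparison[OF _ b1(2)])
      show "eventually (\<lambda>i. norm (norm (fst (a i) - b1 i) / norm (a i)) \<le> norm (fst (a i) - b1 i) / norm (fst (a i))) sequentially"
        using ev
      proof eventually_elim
        case (elim i)
        thus ?case using fl[of i] pos[of i] by (simp add: divide_left_mono)
      qed
    qed
    thus ?thesis using b1 by blast
  qed
qed

lemma comp_snd:
  fixes A :: "'a::euclidean_space set" and B :: "'b::euclidean_space set"
    and a :: "nat \<Rightarrow> 'a \<times> 'b"
  assumes S: "SSP B" and c: "0 \<in> closure B" and a0: "\<forall>i. a i \<noteq> 0" and al: "a \<longlonglongrightarrow> 0"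
    and ad: "(\<lambda>i. (1 / norm (a i)) *\<^sub>R a i) \<longlonglongrightarrow> w" and w: "w \<in> dirset (A \<times> B)"
  shows "\<exists>b1. (\<forall>i. b1 i \<in> B) \<and> (\<lambda>i. norm (snd (a i) - b1 i) / norm (a i)) \<longlonglongrightarrow> 0"
proof -
  have f: "(\<lambda>i. (1 / norm (a i)) *\<^sub>R snd (a i)) \<longlonglongrightarrow> snd w"
    using tendsto_snd[OF ad] by simp
  have nx: "(\<lambda>i. norm (a i)) \<longlonglongrightarrow> 0" using tendsto_norm_zero[OF al] .
  have pos: "norm (a i) > 0" for i using a0 by simp
  have fl: "norm (snd (a i)) \<le> norm (a i)" for i
    using norm_snd_le[where x="fst (a i)" and y="snd (a i)"] by simp
  show ?thesis
  proof (cases "snd w = 0")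
    case True
    obtain b1 where b1: "\<forall>i. b1 i \<in> B \<and> norm (b1 i) < norm (a i) ^ 2"
      using small_seq[OF c a0] by blast
    have "(\<lambda>i. norm (snd (a i) - b1 i) / norm (a i)) \<longlonglongrightarrow> 0"
    proof (rule Lim_null_comparison[OF always_eventually])
      show "(\<lambda>i. norm ((1 / norm (a i)) *\<^sub>R snd (a i)) + norm (a i)) \<longlonglongrightarrow> 0"
        using tendsto_add[OF tendsto_norm_zero[OF f[unfolded True]] nx] by simp
      show "\<forall>i. norm (norm (snd (a i) - b1 i) / norm (a i)) \<le> norm ((1 / norm (a i)) *\<^sub>R snd (a i)) + norm (a i)"
      proof
        fix i
        have "norm (snd (a i) - b1 i) \<le> norm (snd (a i)) + norm (b1 i)" by (rule norm_triangle_ineq4)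
        also have "\<dots> \<le> norm (snd (a i)) + norm (a i) * norm (a i)"
          using b1[rule_format, of i] by (simp add: power2_eq_square)
        finally have h: "norm (snd (a i) - b1 i) \<le> norm (snd (a i)) + norm (a i) * norm (a i)" .
        have "norm (snd (a i) - b1 i) / norm (a i) \<le> (norm (snd (a i)) + norm (a i) * norm (a i)) / norm (a i)"
          using h pos[of i] by (intro divide_right_mono) auto
        also have "\<dots> = norm (snd (a i)) / norm (a i) + norm (a i)" using pos[of i] by (simp add: field_simps)
        finally show "norm (norm (snd (a i) - b1 i) / norm (a i)) \<le> norm ((1 / norm (a i)) *\<^sub>R snd (a i)) + norm (a i)"
          by simp
      qed
    qed
    thus ?thesis using b1 by blast
  next
    case False
    have ev: "eventually (\<lambda>i. snd (a i) \<noteq> 0) sequentially" using dir_lemma(1)[OF f False] .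
    have d: "(\<lambda>i. (1 / norm (snd (a i))) *\<^sub>R snd (a i)) \<longlonglongrightarrow> (1 / norm (snd w)) *\<^sub>R snd w"
      using dir_lemma(2)[OF f False] .
    have fl0: "(\<lambda>i. snd (a i)) \<longlonglongrightarrow> 0" using tendsto_snd[OF al] by simp
    obtain b1 where b1: "\<forall>i. b1 i \<in> B" "(\<lambda>i. norm (snd (a i) - b1 i) / norm (snd (a i))) \<longlonglongrightarrow> 0"
      using ssp_ev[OF S fl0 ev d dir_snd[OF w False]] by blast
    have "(\<lambda>i. norm (snd (a i) - b1 i) / norm (a i)) \<longlonglongrightarrow> 0"
    proof (rule Lim_null_comparison[OF _ b1(2)])
      show "eventually (\<lambda>i. norm (norm (snd (a i) - b1 i) / norm (a i)) \<le> norm (snd (a i) - b1 i) / norm (snd (a i))) sequentially"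
        using ev
      proof eventually_elim
        case (elim i)
        thus ?case using fl[of i] pos[of i] by (simp add: divide_left_mono)
      qed
    qed
    thus ?thesis using b1 by blast
  qed
qed


lemma back_fst:
  fixes A :: "'a::euclidean_space set" and B :: "'b::euclidean_space set"
  assumes S: "SSP (A \<times> B)" and c: "0 \<in> closure B"
  shows "SSP A"
  unfolding SSP_def
proof (intro allI impI, elim conjE bexE)
  fix a :: "nat \<Rightarrow> 'a" and u
  assume a0: "\<forall>i. a i \<noteq> 0" and al: "a \<longlonglongrightarrow> 0" and u: "u \<in> dirset A"
    and ad: "(\<lambda>i. (1 / norm (a i)) *\<^sub>R a i) \<longlonglongrightarrow> u"
  define c where "c i = (a i, 0::'b)" for i
  have nc: "norm (c i) = norm (a i)" for i by (simp add: c_def norm_Pair)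
  have c0: "\<forall>i. c i \<noteq> 0" using a0 by (simp add: c_def zero_prod_def)
  have cl: "c \<longlonglongrightarrow> 0" unfolding c_def using tendsto_Pair[OF al tendsto_const, of 0] by (simp add: zero_prod_def)
  have cd: "(\<lambda>i. (1 / norm (c i)) *\<^sub>R c i) \<longlonglongrightarrow> (u, 0)"
    unfolding nc unfolding c_def using tendsto_Pair[OF ad tendsto_const, of 0] by simp
  obtain b where b: "\<forall>i. b i \<in> A \<times> B" "(\<lambda>i. norm (c i - b i) / norm (c i)) \<longlonglongrightarrow> 0"
    using S c0 cl cd dir_pair_fst[OF u c] unfolding SSP_def by blast
  have r1: "(\<lambda>i. norm (a i - fst (b i)) / norm (a i)) \<longlonglongrightarrow> 0"
  proof (rule Lim_null_comparison[OF always_eventually b(2)], rule allI)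
    fix i
    have e: "c i - b i = (a i - fst (b i), - snd (b i))" by (cases "b i") (simp add: c_def)
    have "norm (a i - fst (b i)) \<le> norm (c i - b i)"
      unfolding e by (rule norm_fst_le)
    thus "norm (norm (a i - fst (b i)) / norm (a i)) \<le> norm (c i - b i) / norm (c i)"
      unfolding nc by (simp add: divide_right_mono)
  qed
  show "\<exists>b. (\<forall>i. b i \<in> A) \<and> (\<lambda>i. norm (a i - b i) / norm (a i)) \<longlonglongrightarrow> 0 \<and>
        (\<lambda>i. norm (a i - b i) / norm (b i)) \<longlonglongrightarrow> 0"
    using b(1) r1 ratio2[OF a0 r1] by (intro exI[of _ "\<lambda>i. fst (b i)"]) (auto simp: mem_Times_iff)
qed


lemma back_snd:
  fixes A :: "'a::euclidean_space set" and B :: "'b::euclidean_space set"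
  assumes S: "SSP (A \<times> B)" and c: "0 \<in> closure A"
  shows "SSP B"
  unfolding SSP_def
proof (intro allI impI, elim conjE bexE)
  fix a :: "nat \<Rightarrow> 'b" and u
  assume a0: "\<forall>i. a i \<noteq> 0" and al: "a \<longlonglongrightarrow> 0" and u: "u \<in> dirset B"
    and ad: "(\<lambda>i. (1 / norm (a i)) *\<^sub>R a i) \<longlonglongrightarrow> u"
  define c where "c i = (0::'a, a i)" for i
  have nc: "norm (c i) = norm (a i)" for i by (simp add: c_def norm_Pair)
  have c0: "\<forall>i. c i \<noteq> 0" using a0 by (simp add: c_def zero_prod_def)
  have cl: "c \<longlonglongrightarrow> 0" unfolding c_def using tendsto_Pair[OF tendsto_const al, of 0] by (simp add: zero_prod_def)
  have cd: "(\<lambda>i. (1 / norm (c i)) *\<^sub>R c i) \<longlonglongrightarrow> (0, u)"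
    unfolding nc unfolding c_def using tendsto_Pair[OF tendsto_const ad, of 0] by simp
  obtain b where b: "\<forall>i. b i \<in> A \<times> B" "(\<lambda>i. norm (c i - b i) / norm (c i)) \<longlonglongrightarrow> 0"
    using S c0 cl cd dir_pair_snd[OF u c] unfolding SSP_def by blast
  have r1: "(\<lambda>i. norm (a i - snd (b i)) / norm (a i)) \<longlonglongrightarrow> 0"
  proof (rule Lim_null_comparison[OF always_eventually b(2)], rule allI)
    fix i
    have e: "c i - b i = (- fst (b i), a i - snd (b i))" by (cases "b i") (simp add: c_def)
    have "norm (a i - snd (b i)) \<le> norm (c i - b i)"
      unfolding e by (rule norm_snd_le)
    thus "norm (norm (a i - snd (b i)) / norm (a i)) \<le> norm (c i - b i) / norm (c i)"
      unfolding nc by (simp add: divide_right_mono)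
  qed
  show "\<exists>b. (\<forall>i. b i \<in> B) \<and> (\<lambda>i. norm (a i - b i) / norm (a i)) \<longlonglongrightarrow> 0 \<and>
        (\<lambda>i. norm (a i - b i) / norm (b i)) \<longlonglongrightarrow> 0"
    using b(1) r1 ratio2[OF a0 r1] by (intro exI[of _ "\<lambda>i. snd (b i)"]) (auto simp: mem_Times_iff)
qed

lemma forward:
  fixes A :: "'a::euclidean_space set" and B :: "'b::euclidean_space set"
  assumes SA: "SSP A" and SB: "SSP B" and cA: "0 \<in> closure A" and cB: "0 \<in> closure B"
  shows "SSP (A \<times> B)"
  unfolding SSP_def
proof (intro allI impI, elim conjE bexE)
  fix a :: "nat \<Rightarrow> 'a \<times> 'b" and w
  assume a0: "\<forall>i. a i \<noteq> 0" and al: "a \<longlonglongrightarrow> 0" and w: "w \<in> dirset (A \<times> B)"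
    and ad: "(\<lambda>i. (1 / norm (a i)) *\<^sub>R a i) \<longlonglongrightarrow> w"
  obtain b1 where b1: "\<forall>i. b1 i \<in> A" "(\<lambda>i. norm (fst (a i) - b1 i) / norm (a i)) \<longlonglongrightarrow> 0"
    using comp_fst[OF SA cA a0 al ad w] by blast
  obtain b2 where b2: "\<forall>i. b2 i \<in> B" "(\<lambda>i. norm (snd (a i) - b2 i) / norm (a i)) \<longlonglongrightarrow> 0"
    using comp_snd[OF SB cB a0 al ad w] by blast
  define b where "b i = (b1 i, b2 i)" for i
  have sum0: "(\<lambda>i. norm (fst (a i) - b1 i) / norm (a i) + norm (snd (a i) - b2 i) / norm (a i)) \<longlonglongrightarrow> 0"
    using tendsto_add[OF b1(2) b2(2)] by simp
  have r1: "(\<lambda>i. norm (a i - b i) / norm (a i)) \<longlonglongrightarrow> 0"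
  proof (rule Lim_null_comparison[OF always_eventually sum0], rule allI)
    fix i
    have e: "a i - b i = (fst (a i) - b1 i, snd (a i) - b2 i)" by (cases "a i") (simp add: b_def)
    have "norm (a i - b i) \<le> norm (fst (a i) - b1 i) + norm (snd (a i) - b2 i)"
      unfolding e by (rule norm_Pair_le)
    hence "norm (a i - b i) / norm (a i) \<le> (norm (fst (a i) - b1 i) + norm (snd (a i) - b2 i)) / norm (a i)"
      by (simp add: divide_right_mono)
    thus "norm (norm (a i - b i) / norm (a i)) \<le> norm (fst (a i) - b1 i) / norm (a i) + norm (snd (a i) - b2 i) / norm (a i)"
      by (simp add: add_divide_distrib)
  qed
  show "\<exists>b. (\<forall>i. b i \<in> A \<times> B) \<and> (\<lambda>i. norm (a i - b i) / norm (a i)) \<longlonglongrightarrow> 0 \<and>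
        (\<lambda>i. norm (a i - b i) / norm (b i)) \<longlonglongrightarrow> 0"
    using b1(1) b2(1) r1 ratio2[OF a0 r1] by (intro exI[of _ b]) (auto simp: b_def)
qed

theorem proposition2p33:
  fixes A :: "'a::euclidean_space set" and B :: "'b::euclidean_space set"
  assumes "0 \<in> closure A" and "0 \<in> closure B"
  shows "(SSP A \<and> SSP B) \<longleftrightarrow> SSP (A \<times> B)"
  using forward[OF _ _ assms] back_fst[OF _ assms(2)] back_snd[OF _ assms(1)] by blast

end
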